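(* Let $A\in\mathbb{C}^{n\times n}$ and $m\in\mathbb{N}=\{1,2,\dots\}$. Then the system of equations in $X\in\mathbb{C}^{n\times n}$ $$XAX=X,\qquad AX=(A^{\mathrm{cEP}})^mA^mP_{A^m},\qquad XA=(A^{\mathrm{cEP}})^{m+1}A^mP_{A^m}A$$ is consistent and its unique solution is $X=A^{\#_m}$.
   Context: For $A\in\mathbb{C}^{n\times n}$: $A^\dagger$ Moore–Penrose inverse, $P_A=AA^\dagger$, $\mathcal{R}(\cdot)$ column space. The index $k=\mathrm{Ind}(A)$ is the smallest nonnegative integer with $\mathcal{R}(A^k)=\mathcal{R}(A^{k+1})$ ($A^0=I_n$). The core-EP inverse $A^{\mathrm{cEP}}$ is the unique $X$ with $XAX=X$ and $\mathcal{R}(X)=\mathcal{R}(X^* )=\mathcal{R}(A^k)$. For $m\in\mathbb{N}$, the $m$-weak group inverse is $A^{\mathrm{WG}_m}:=(A^{\mathrm{cEP}})^{m+1}A^m$ and the $m$-weak core inverse is $A^{\#_m}:=A^{\mathrm{WG}_m}P_{A^m}$. *)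

theory Defs
  imports "HOL-Analysis.Analysis"
begin

text \<open>Square complex matrices of size n are represented as complex^'n^'n,
with n = CARD('n) arbitrary.\<close>

type_synonym 'n cmat = "complex^'n^'n"

definition cadj :: "'n::finite cmat \<Rightarrow> 'n cmat" where
  "cadj A = (\<chi> i j. cnj (A $ j $ i))"

primrec cmatpow :: "'n::finite cmat \<Rightarrow> nat \<Rightarrow> 'n cmat" where
  "cmatpow A 0 = mat 1"
| "cmatpow A (Suc k) = cmatpow A k ** A"

definition colspace :: "'n::finite cmat \<Rightarrow> (complex^'n) set" where
  "colspace A = range (\<lambda>x. A *v x)"

definition mp_inv :: "'n::finite cmat \<Rightarrow> 'n cmat" where
  "mp_inv A = (THE X. A ** X ** A = A \<and> X ** A ** X = X \<and>
                      cadj (A ** X) = A ** X \<and> cadj (X ** A) = X ** A)"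

definition proj :: "'n::finite cmat \<Rightarrow> 'n cmat" where
  "proj A = A ** mp_inv A"

definition ind :: "'n::finite cmat \<Rightarrow> nat" where
  "ind A = (LEAST k. colspace (cmatpow A k) = colspace (cmatpow A (Suc k)))"

definition core_EP :: "'n::finite cmat \<Rightarrow> 'n cmat" where
  "core_EP A = (THE X. X ** A ** X = X \<and>
                       colspace X = colspace (cmatpow A (ind A)) \<and>
                       colspace (cadj X) = colspace (cmatpow A (ind A)))"

definition m_weak_group :: "'n::finite cmat \<Rightarrow> nat \<Rightarrow> 'n cmat" where
  "m_weak_group A m = cmatpow (core_EP A) (Suc m) ** cmatpow A m"

definition m_weak_core :: "'n::finite cmat \<Rightarrow> nat \<Rightarrow> 'n cmat" where
  "m_weak_core A m = m_weak_group A m ** proj (cmatpow A m)"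

end

theory Submission
  imports Defs
begin

lemma cadj_cadj[simp]: "cadj (cadj A) = A"
  by (simp add: cadj_def vec_eq_iff)

lemma cadj_mult: "cadj (A ** B) = cadj B ** cadj A"
  by (simp add: cadj_def vec_eq_iff matrix_matrix_mult_def mult.commute)

lemma cadj_diff: "cadj (A - B) = cadj A - cadj B"
  by (simp add: cadj_def vec_eq_iff)

lemma cadj_mat1[simp]: "cadj (mat 1 :: 'n::finite cmat) = mat 1"
  by (simp add: cadj_def vec_eq_iff mat_def)

lemma cmatpow_commute: "A ** cmatpow A k = cmatpow A k ** A"
  by (induction k) (simp_all add: matrix_mul_assoc)

lemma cmatpow_add: "cmatpow A (i + j) = cmatpow A i ** cmatpow A j"
  by (induction j) (simp_all add: matrix_mul_assoc)

lemma cmatpow_Suc_left: "cmatpow A (Suc k) = A ** cmatpow A k"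
  by (simp add: cmatpow_commute)

lemma cadj_self_zero:
  fixes B :: "'n::finite cmat"
  assumes "cadj B ** B = 0"
  shows "B = 0"
proof -
  have "B $ i $ j = 0" for i j
  proof -
    have "(cadj B ** B) $ j $ j = (\<Sum>l\<in>UNIV. of_real ((cmod (B $ l $ j))\<^sup>2))"
      by (simp only: complex_norm_square) (simp add: matrix_matrix_mult_def cadj_def mult.commute)
    then have "of_real (\<Sum>l\<in>UNIV. (cmod (B $ l $ j))\<^sup>2) = (0::complex)"
      using assms by (simp only: of_real_sum) simp
    then have "(\<Sum>l\<in>UNIV. (cmod (B $ l $ j))\<^sup>2) = 0"
      using of_real_eq_0_iff by blast
    then have "\<forall>l\<in>UNIV. (cmod (B $ l $ j))\<^sup>2 = 0"
      by (subst sum_nonneg_eq_0_iff[symmetric]) auto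
    then show ?thesis by simp
  qed
  then show ?thesis by (simp add: vec_eq_iff)
qed

lemma cancel_left:
  fixes A Z :: "'n::finite cmat"
  assumes "cadj A ** A ** Z = 0"
  shows "A ** Z = 0"
proof -
  have "cadj (A ** Z) ** (A ** Z) = cadj Z ** (cadj A ** A ** Z)"
    by (simp add: cadj_mult matrix_mul_assoc)
  also have "\<dots> = 0" using assms by simp
  finally show ?thesis by (rule cadj_self_zero)
qed

lemma subspace_colspace: "subspace (colspace M)"
  unfolding colspace_def
  by (rule linear_subspace_image[OF matrix_vector_mul_linear subspace_UNIV])

lemma subspace_kernel: "subspace {x. (M::'n::finite cmat) *v x = 0}"
  using linear_subspace_kernel[OF matrix_vector_mul_linear[of M]] by simp

lemma colspace_mult_sub: "colspace (M ** Z) \<subseteq> colspace M"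
  unfolding colspace_def by (auto simp: matrix_vector_mul_assoc[symmetric])

lemma colspace_sub_ex:
  fixes M N :: "'n::finite cmat"
  assumes "colspace M \<subseteq> colspace N"
  shows "\<exists>Z. M = N ** Z"
proof -
  have "\<forall>j. \<exists>z. M *v axis j 1 = N *v z"
    using assms unfolding colspace_def by blast
  then obtain z where z: "\<And>j. M *v axis j 1 = N *v z j" by metis
  define Z where "Z = (\<chi> i j. z j $ i)"
  have "M $ i $ j = (N ** Z) $ i $ j" for i j
  proof -
    have "M $ i $ j = (M *v axis j 1) $ i"
      by (simp add: matrix_vector_mult_def axis_def mult.commute[of _ "if _ then _ else _"] if_distrib  cong: if_cong)
    also have "\<dots> = (N *v z j) $ i" by (simp add: z)
    also have "\<dots> = (N ** Z) $ i $ j"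
      by (simp add: matrix_vector_mult_def matrix_matrix_mult_def Z_def)
    finally show ?thesis .
  qed
  then show ?thesis by (auto simp: vec_eq_iff)
qed

lemma chain_dec:
  fixes S :: "nat \<Rightarrow> 'a::euclidean_space set"
  assumes sub: "\<And>j. subspace (S j)" and dec: "\<And>j. S (Suc j) \<subseteq> S j"
  shows "\<exists>j. S (Suc j) = S j"
proof (rule ccontr)
  assume "\<not> ?thesis"
  then have ne: "\<And>j. S (Suc j) \<noteq> S j" by auto
  have lt: "dim (S (Suc j)) < dim (S j)" for j
    using eucl.subspace_dim_equal[OF sub sub dec, of j] ne[of j] by linarith
  have "dim (S j) + j \<le> dim (S 0)" for j
  proof (induction j)
    case (Suc j) then show ?case using lt[of j] by linarith
  qed simp
  from this[of "Suc (dim (S 0))"] show False by linarith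
qed

lemma chain_inc:
  fixes S :: "nat \<Rightarrow> 'a::euclidean_space set"
  assumes sub: "\<And>j. subspace (S j)" and inc: "\<And>j. S j \<subseteq> S (Suc j)"
  shows "\<exists>j. S (Suc j) = S j"
proof (rule ccontr)
  assume "\<not> ?thesis"
  then have ne: "\<And>j. S (Suc j) \<noteq> S j" by auto
  have lt: "dim (S j) < dim (S (Suc j))" for j
    using eucl.subspace_dim_equal[OF sub sub inc, of j] ne[of j] by fastforce
  have "j \<le> dim (S j)" for j
  proof (induction j)
    case (Suc j) then show ?case using lt[of j] by linarith
  qed simp
  from this[of "Suc DIM('a)"] show False using dim_subset_UNIV[of "S (Suc DIM('a))"] by linarith
qed

lemma mat_sub_ldistrib: "(A::'n::finite cmat) ** (B - C) = A ** B - A ** C"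
  by (simp add: vec_eq_iff matrix_matrix_mult_def sum_subtractf algebra_simps)

lemma mat_sub_rdistrib: "((B::'n::finite cmat) - C) ** A = B ** A - C ** A"
  by (simp add: vec_eq_iff matrix_matrix_mult_def sum_subtractf algebra_simps)

lemma mat_mul_zero[simp]: "(A::'n::finite cmat) ** 0 = 0" "0 ** A = 0"
  by (simp_all add: vec_eq_iff matrix_matrix_mult_def)

definition penrose :: "'n::finite cmat \<Rightarrow> 'n cmat \<Rightarrow> bool" where
  "penrose A X \<longleftrightarrow> A ** X ** A = A \<and> X ** A ** X = X \<and>
      cadj (A ** X) = A ** X \<and> cadj (X ** A) = X ** A"

lemma penrose_unique:
  assumes X: "penrose A X" and Y: "penrose A Y" shows "X = Y"
proof -
  from X have x1: "A ** X ** A = A" and x2: "X ** A ** X = X" and x3: "cadj (A ** X) = A ** X"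
    and x4: "cadj (X ** A) = X ** A" by (auto simp: penrose_def)
  from Y have y1: "A ** Y ** A = A" and y2: "Y ** A ** Y = Y" and y3: "cadj (A ** Y) = A ** Y"
    and y4: "cadj (Y ** A) = Y ** A" by (auto simp: penrose_def)
  have ax: "A ** X = cadj X ** cadj A" using x3 by (simp add: cadj_mult)
  have ay: "A ** Y = cadj Y ** cadj A" using y3 by (simp add: cadj_mult)
  have xa: "X ** A = cadj A ** cadj X" using x4 by (simp add: cadj_mult)
  have ya: "Y ** A = cadj A ** cadj Y" using y4 by (simp add: cadj_mult)
  have ca: "cadj A ** cadj Y ** cadj A = cadj A"
    using arg_cong[OF y1, of cadj] by (simp add: cadj_mult matrix_mul_assoc)
  have ca2: "cadj A ** cadj X ** cadj A = cadj A"
    using arg_cong[OF x1, of cadj] by (simp add: cadj_mult matrix_mul_assoc)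
  have "X = X ** (A ** X)" using x2 by (simp add: matrix_mul_assoc)
  also have "\<dots> = X ** cadj X ** cadj A" by (simp add: ax matrix_mul_assoc)
  also have "\<dots> = X ** cadj X ** (cadj A ** cadj Y ** cadj A)" by (simp only: ca)
  also have "\<dots> = X ** (cadj X ** cadj A) ** (cadj Y ** cadj A)" by (simp add: matrix_mul_assoc)
  also have "\<dots> = X ** (A ** X) ** (A ** Y)" by (simp only: ax ay)
  also have "\<dots> = (X ** A ** X) ** A ** Y" by (simp add: matrix_mul_assoc)
  also have "\<dots> = X ** A ** Y" by (simp only: x2)
  finally have 1: "X = X ** A ** Y" .
  have "Y = (Y ** A) ** Y" using y2 by (simp add: matrix_mul_assoc)
  also have "\<dots> = cadj A ** cadj Y ** Y" by (simp only: ya)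
  also have "\<dots> = (cadj A ** cadj X ** cadj A) ** cadj Y ** Y" by (simp only: ca2)
  also have "\<dots> = (cadj A ** cadj X) ** (cadj A ** cadj Y) ** Y" by (simp add: matrix_mul_assoc)
  also have "\<dots> = (X ** A) ** (Y ** A) ** Y" by (simp only: xa ya)
  also have "\<dots> = X ** A ** (Y ** A ** Y)" by (simp add: matrix_mul_assoc)
  also have "\<dots> = X ** A ** Y" by (simp only: y2)
  finally show ?thesis using 1 by simp
qed

lemma herm_cancel:
  fixes H Z :: "'n::finite cmat"
  assumes h: "cadj H = H"
  shows "cmatpow H (Suc j) ** Z = 0 \<Longrightarrow> H ** Z = 0"
proof (induction j)
  case 0 then show ?case by simp
next
  case (Suc j)
  have "cadj H ** H ** (cmatpow H j ** Z) = cmatpow H (Suc (Suc j)) ** Z"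
    by (simp only: h cmatpow_Suc_left matrix_mul_assoc)
  also have "\<dots> = 0" by fact
  finally have "H ** (cmatpow H j ** Z) = 0" by (rule cancel_left)
  then have "cmatpow H (Suc j) ** Z = 0" by (simp only: cmatpow_Suc_left matrix_mul_assoc)
  then show ?case by (rule Suc.IH)
qed

lemma mp_exists: "\<exists>X. penrose (A::'n::finite cmat) X"
proof -
  define H where "H = cadj A ** A"
  have hH: "cadj H = H" by (simp add: H_def cadj_mult)
  have "\<exists>K. colspace (cmatpow H (Suc K)) = colspace (cmatpow H K)"
  proof (rule chain_dec)
    show "subspace (colspace (cmatpow H j))" for j by (rule subspace_colspace)
    show "colspace (cmatpow H (Suc j)) \<subseteq> colspace (cmatpow H j)" for j
      by (simp add: colspace_mult_sub)
  qed
  then obtain K where K: "colspace (cmatpow H (Suc K)) = colspace (cmatpow H K)" by blast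
  then obtain W where W: "cmatpow H K = cmatpow H (Suc K) ** W"
    using colspace_sub_ex[of "cmatpow H K" "cmatpow H (Suc K)"] by auto
  define Z where "Z = mat 1 - H ** W"
  have HZ: "H ** Z = 0"
  proof (cases K)
    case 0
    have "mat 1 = H ** W" using W unfolding 0 by simp
    then show ?thesis by (simp add: Z_def)
  next
    case (Suc j)
    have "cmatpow H (Suc j) ** Z = cmatpow H K - cmatpow H (Suc K) ** W"
      by (simp add: Z_def Suc mat_sub_ldistrib matrix_mul_assoc)
    also have "\<dots> = 0" by (simp only: W[symmetric] diff_self)
    finally show ?thesis by (rule herm_cancel[OF hH])
  qed
  have F1: "H ** H ** W = H" using HZ by (simp add: Z_def mat_sub_ldistrib matrix_mul_assoc)
  have "cadj A ** A ** Z = 0" using HZ by (simp add: H_def)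
  then have "A ** Z = 0" by (rule cancel_left)
  then have F3: "A ** H ** W = A" by (simp add: Z_def mat_sub_ldistrib matrix_mul_assoc)
  have "cadj H ** H ** (W ** H - mat 1) = 0"
    using F1 by (simp add: hH mat_sub_ldistrib matrix_mul_assoc)
  then have "H ** (W ** H - mat 1) = 0" by (rule cancel_left)
  then have F5: "H ** W ** H = H" by (simp add: mat_sub_ldistrib matrix_mul_assoc)
  have F2: "cadj W ** H ** H = H"
    using arg_cong[OF F1, of cadj] by (simp add: hH cadj_mult matrix_mul_assoc)
  have F6: "H ** W = cadj W ** H"
  proof -
    have "H ** W = cadj W ** H ** H ** W" by (simp only: F2)
    also have "\<dots> = cadj W ** (H ** H ** W)" by (simp add: matrix_mul_assoc)
    also have "\<dots> = cadj W ** H" by (simp only: F1)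
    finally show ?thesis .
  qed
  have F4: "H ** W ** cadj A = cadj A"
    using arg_cong[OF F3, of cadj] by (simp add: hH cadj_mult matrix_mul_assoc F6)
  have F5': "H ** cadj W ** H = H"
    using arg_cong[OF F5, of cadj] by (simp add: hH cadj_mult matrix_mul_assoc)
  define X where "X = cadj W ** cadj A"
  have XA: "X ** A = cadj W ** H" by (simp add: X_def H_def matrix_mul_assoc)
  have p1: "A ** X ** A = A"
  proof -
    have "A ** X ** A = A ** (X ** A)" by (simp add: matrix_mul_assoc)
    also have "\<dots> = A ** (H ** W)" by (simp add: XA F6)
    also have "\<dots> = A" using F3 by (simp add: matrix_mul_assoc)
    finally show ?thesis .
  qed
  have X2: "X = H ** W ** W ** cadj A"
  proof -
    have "X = cadj W ** (H ** W ** cadj A)" by (simp only: F4 X_def)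
    also have "\<dots> = (cadj W ** H) ** W ** cadj A" by (simp add: matrix_mul_assoc)
    also have "\<dots> = H ** W ** W ** cadj A" by (simp only: F6)
    finally show ?thesis .
  qed
  have p2: "X ** A ** X = X"
  proof -
    have "X ** A ** X = (cadj W ** H) ** X" by (simp only: XA)
    also have "\<dots> = (H ** W) ** (H ** W ** W ** cadj A)" by (subst X2) (simp only: F6)
    also have "\<dots> = (H ** W ** H) ** W ** W ** cadj A" by (simp add: matrix_mul_assoc)
    also have "\<dots> = X" by (simp only: F5 X2)
    finally show ?thesis .
  qed
  have p4: "cadj (X ** A) = X ** A"
    by (simp add: XA cadj_mult hH F6)
  have p3: "cadj (A ** X) = A ** X"
  proof -
    have F3a: "A ** (H ** W) = A" using F3 by (simp add: matrix_mul_assoc)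
    have F4': "cadj W ** H ** cadj A = cadj A" using F4 by (simp add: F6)
    have g: "A ** (H ** W) = A ** (cadj W ** H)" by (simp only: F6)
    have e1: "A ** cadj W ** cadj A = A ** cadj W ** H ** W ** cadj A"
    proof -
      have "A ** cadj W ** cadj A = (A ** (H ** W)) ** cadj W ** ((cadj W ** H) ** cadj A)"
        by (simp only: F3a F4')
      also have "\<dots> = (A ** (cadj W ** H)) ** cadj W ** ((H ** W) ** cadj A)"
        by (simp only: g F4 F4')
      also have "\<dots> = A ** cadj W ** (H ** cadj W ** H) ** W ** cadj A"
        by (simp add: matrix_mul_assoc)
      also have "\<dots> = A ** cadj W ** H ** W ** cadj A" by (simp only: F5')
      finally show ?thesis .
    qed
    have e2: "A ** W ** cadj A = A ** cadj W ** H ** W ** cadj A"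
    proof -
      have "A ** W ** cadj A = (A ** (H ** W)) ** W ** ((H ** W) ** cadj A)"
        by (simp only: F3a F4)
      also have "\<dots> = (A ** (cadj W ** H)) ** W ** ((H ** W) ** cadj A)"
        by (simp only: g)
      also have "\<dots> = A ** cadj W ** (H ** W ** H) ** W ** cadj A"
        by (simp add: matrix_mul_assoc)
      also have "\<dots> = A ** cadj W ** H ** W ** cadj A" by (simp only: F5)
      finally show ?thesis .
    qed
    have "cadj (A ** X) = A ** W ** cadj A" by (simp add: X_def cadj_mult matrix_mul_assoc)
    also have "\<dots> = A ** X" using e1 e2 by (simp add: X_def matrix_mul_assoc)
    finally show ?thesis .
  qed
  show ?thesis using p1 p2 p3 p4 unfolding penrose_def by blast
qed

lemma mp_inv_penrose: "penrose A (mp_inv A)"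
proof -
  have "\<exists>!X. penrose A X" using mp_exists penrose_unique by blast
  then have "penrose A (THE X. penrose A X)" by (rule theI')
  then show ?thesis unfolding mp_inv_def penrose_def by simp
qed

lemma index_prop: "colspace (cmatpow A (Suc (ind A))) = colspace (cmatpow A (ind A))"
proof -
  have "\<exists>K. (\<lambda>j. colspace (cmatpow A j)) (Suc K) = (\<lambda>j. colspace (cmatpow A j)) K"
  proof (rule chain_dec)
    show "subspace (colspace (cmatpow A j))" for j by (rule subspace_colspace)
    show "colspace (cmatpow A (Suc j)) \<subseteq> colspace (cmatpow A j)" for j
      unfolding cmatpow.simps by (rule colspace_mult_sub)
  qed
  then have "\<exists>K. colspace (cmatpow A K) = colspace (cmatpow A (Suc K))" by (metis)
  then have "colspace (cmatpow A (ind A)) = colspace (cmatpow A (Suc (ind A)))"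
    unfolding ind_def by (rule LeastI_ex)
  then show ?thesis by simp
qed

lemma powers_absorb:
  fixes A B W :: "'n::finite cmat"
  assumes hW: "B = A ** B ** W"
  shows "\<exists>V. B = cmatpow A j ** B ** V"
proof (induction j)
  case 0
  show ?case by (rule exI[of _ "mat 1"]) simp
next
  case (Suc j)
  then obtain V where V: "B = cmatpow A j ** B ** V" by blast
  have "B = cmatpow A j ** (A ** B ** W) ** V" using V hW by simp
  also have "\<dots> = cmatpow A (Suc j) ** B ** (W ** V)" by (simp add: matrix_mul_assoc)
  finally show ?case by blast
qed

lemma null_incl:
  fixes A W :: "'n::finite cmat"
  assumes hW: "cmatpow A k = A ** cmatpow A k ** W"
  shows "(A ** cmatpow A k) *v x = 0 \<Longrightarrow> cmatpow A k *v x = 0"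
proof -
  assume ax: "(A ** cmatpow A k) *v x = 0"
  have "\<exists>J. (\<lambda>j. {x. cmatpow A (j + k) *v x = 0}) (Suc J) = (\<lambda>j. {x. cmatpow A (j + k) *v x = 0}) J"
  proof (rule chain_inc)
    show "subspace {x. cmatpow A (j + k) *v x = 0}" for j by (rule subspace_kernel)
    show "{x. cmatpow A (j + k) *v x = 0} \<subseteq> {x. cmatpow A (Suc j + k) *v x = 0}" for j
      by (auto simp del: cmatpow.simps simp: cmatpow_Suc_left matrix_vector_mul_assoc[symmetric])
  qed
  then obtain J where J: "{x. cmatpow A (Suc J + k) *v x = 0} = {x. cmatpow A (J + k) *v x = 0}"
    by auto
  obtain V where V: "cmatpow A k = cmatpow A J ** cmatpow A k ** V"
    using powers_absorb[OF hW] by blast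
  have e: "cmatpow A J ** cmatpow A k = cmatpow A (J + k)" by (simp add: cmatpow_add)
  have "cmatpow A (Suc J + k) *v (V *v x) = (A ** (cmatpow A J ** cmatpow A k ** V)) *v x"
    by (simp del: cmatpow.simps add: e cmatpow_Suc_left matrix_vector_mul_assoc matrix_mul_assoc)
  also have "\<dots> = 0" using V ax by simp
  finally have "V *v x \<in> {x. cmatpow A (J + k) *v x = 0}" using J by auto
  then have "(cmatpow A J ** cmatpow A k ** V) *v x = 0"
    by (simp add: e matrix_vector_mul_assoc[symmetric])
  then show ?thesis using V by simp
qed

lemma null_incl_mat:
  fixes A W S :: "'n::finite cmat"
  assumes hW: "cmatpow A k = A ** cmatpow A k ** W"
    and "A ** cmatpow A k ** S = 0"
  shows "cmatpow A k ** S = 0"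
proof -
  have "(cmatpow A k ** S) *v x = 0 *v x" for x
  proof -
    have "(A ** cmatpow A k) *v (S *v x) = 0"
      using assms(2) by (simp add: matrix_vector_mul_assoc)
    then have "cmatpow A k *v (S *v x) = 0" by (rule null_incl[OF hW])
    then show ?thesis by (simp add: matrix_vector_mul_assoc)
  qed
  then show ?thesis using matrix_eq by blast
qed

lemma core_EP_props:
  fixes A :: "'n::finite cmat"
  shows "core_EP A ** A ** core_EP A = core_EP A"
    and "A ** core_EP A ** core_EP A = core_EP A"
    and "\<exists>Y. core_EP A = cmatpow A m ** Y"
proof -
  define B where "B = cmatpow A (ind A)"
  have AB: "A ** B = cmatpow A (Suc (ind A))" by (simp add: B_def cmatpow_commute)
  have idx: "colspace (A ** B) = colspace B" using index_prop[of A] by (simp only: B_def[symmetric] AB[symmetric])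
  obtain W where hW: "B = A ** B ** W"
    using colspace_sub_ex[of B "A ** B"] idx by auto
  define G where "G = mp_inv B"
  have "penrose B G" unfolding G_def by (rule mp_inv_penrose)
  then have g1: "B ** G ** B = B" and g2: "G ** B ** G = G" and g3: "cadj (B ** G) = B ** G"
    by (auto simp: penrose_def)
  define P where "P = B ** G"
  define X0 where "X0 = B ** W ** G"
  have AX0: "A ** X0 = P"
    by (simp add: X0_def P_def matrix_mul_assoc hW[symmetric])
  have c1: "X0 ** A ** X0 = X0"
  proof -
    have "X0 ** A ** X0 = B ** W ** (G ** B ** G)"
      by (simp add: matrix_mul_assoc[symmetric] AX0) (simp add: X0_def P_def matrix_mul_assoc)
    then show ?thesis by (simp add: g2 X0_def)
  qed
  obtain V where V: "A ** B = B ** V"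
    using colspace_sub_ex[of "A ** B" B] idx by auto
  have PAB: "P ** (A ** B) = A ** B"
    by (simp add: V P_def g1 matrix_mul_assoc)
  have "A ** B ** (W ** G ** (A ** B) - mat 1) = P ** (A ** B) - A ** B"
    by (simp add: mat_sub_ldistrib matrix_mul_assoc hW[symmetric] P_def)
  also have "\<dots> = 0" by (simp add: PAB)
  finally have "B ** (W ** G ** (A ** B) - mat 1) = 0"
    using null_incl_mat[of A "ind A" W] hW unfolding B_def by blast
  then have XAB: "X0 ** (A ** B) = B"
    by (simp add: mat_sub_ldistrib X0_def matrix_mul_assoc)
  have cs1: "colspace X0 = colspace B"
  proof
    show "colspace X0 \<subseteq> colspace B"
      unfolding X0_def matrix_mul_assoc[symmetric] by (rule colspace_mult_sub)
    show "colspace B \<subseteq> colspace X0"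
      using colspace_mult_sub[of X0 "A ** B"] XAB by simp
  qed
  have cG: "cadj G = B ** G ** cadj G"
  proof -
    have "cadj G = cadj (G ** (B ** G))" using g2 by (simp add: matrix_mul_assoc)
    also have "\<dots> = B ** G ** cadj G" by (simp only: cadj_mult[of G "B ** G"] g3)
    finally show ?thesis .
  qed
  have cs2: "colspace (cadj X0) = colspace B"
  proof
    have "cadj X0 = B ** (G ** cadj G ** cadj W ** cadj B)"
      unfolding X0_def cadj_mult by (subst cG) (simp add: matrix_mul_assoc)
    then show "colspace (cadj X0) \<subseteq> colspace B" using colspace_mult_sub by metis
    have "cadj X0 ** (cadj A ** B) = cadj (A ** X0) ** B"
      by (simp add: cadj_mult matrix_mul_assoc)
    also have "\<dots> = B" by (simp add: AX0 P_def g3 g1)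
    finally show "colspace B \<subseteq> colspace (cadj X0)" using colspace_mult_sub by metis
  qed
  have uniq: "Y = X0" if Y: "Y ** A ** Y = Y \<and> colspace Y = colspace B \<and> colspace (cadj Y) = colspace B" for Y
  proof -
    obtain Z1 where Z1: "cadj Y = B ** Z1" using Y colspace_sub_ex[of "cadj Y" B] by auto
    have "P ** cadj Y = cadj Y" by (simp add: Z1 P_def g1 matrix_mul_assoc)
    then have "cadj (P ** cadj Y) = Y" by simp
    then have YP: "Y ** P = Y" using g3 unfolding P_def[symmetric] by (simp only: cadj_mult[of P "cadj Y"] cadj_cadj)
    obtain Z2 where Z2: "B = Y ** Z2" using Y colspace_sub_ex[of B Y] by auto
    have YAB: "Y ** A ** B = B"
    proof -
      have "Y ** A ** B = (Y ** A ** Y) ** Z2" by (simp add: Z2 matrix_mul_assoc)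
      also have "\<dots> = B" using Y Z2 by simp
      finally show ?thesis .
    qed
    have "Y = Y ** (A ** B ** W ** G)" using YP hW P_def by simp
    also have "\<dots> = (Y ** A ** B) ** W ** G" by (simp add: matrix_mul_assoc)
    also have "\<dots> = X0" by (simp add: YAB X0_def)
    finally show ?thesis .
  qed
  have CE: "core_EP A = X0"
    unfolding core_EP_def B_def[symmetric]
  proof (rule the_equality)
    show "X0 ** A ** X0 = X0 \<and> colspace X0 = colspace B \<and> colspace (cadj X0) = colspace B"
      using c1 cs1 cs2 by blast
  qed (use uniq in blast)
  show "core_EP A ** A ** core_EP A = core_EP A" using c1 CE by simp
  have "A ** X0 ** X0 = P ** X0" by (simp add: AX0)
  also have "\<dots> = B ** (G ** B) ** W ** G" by (simp add: P_def X0_def matrix_mul_assoc)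
  also have "\<dots> = X0" by (simp add: matrix_mul_assoc g1 X0_def)
  finally show "A ** core_EP A ** core_EP A = core_EP A" using CE by simp
  obtain U where U: "B = cmatpow A m ** B ** U" using powers_absorb[OF hW] by blast
  have "core_EP A = cmatpow A m ** (B ** U ** W ** G)"
    using CE U X0_def by (metis matrix_mul_assoc)
  then show "\<exists>Y. core_EP A = cmatpow A m ** Y" by blast
qed

lemma pow_pow_absorb:
  fixes A C :: "'n::finite cmat"
  assumes h: "A ** C ** C = C"
  shows "cmatpow A (Suc j) ** cmatpow C (Suc j) = A ** C"
proof (induction j)
  case 0 then show ?case by simp
next
  case (Suc j)
  have "cmatpow A (Suc (Suc j)) ** cmatpow C (Suc (Suc j))
        = cmatpow A (Suc j) ** (A ** C ** C) ** cmatpow C j"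
    by (simp only: cmatpow.simps(2)[of A "Suc j"] cmatpow_Suc_left[of C "Suc j"]
        cmatpow_Suc_left[of C j] matrix_mul_assoc)
  also have "\<dots> = cmatpow A (Suc j) ** cmatpow C (Suc j)"
    by (simp only: h cmatpow_Suc_left[of C j] matrix_mul_assoc)
  also have "\<dots> = A ** C" by (rule Suc.IH)
  finally show ?case .
qed

theorem theorem4p8:
  fixes A :: "complex^'n^'n" and m :: nat
  assumes "m \<ge> 1"
  shows "\<forall>X :: complex^'n^'n.
           (X ** A ** X = X \<and>
            A ** X = cmatpow (core_EP A) m ** cmatpow A m ** proj (cmatpow A m) \<and>
            X ** A = cmatpow (core_EP A) (Suc m) ** cmatpow A m ** proj (cmatpow A m) ** A)
           \<longleftrightarrow> X = m_weak_core A m"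
proof -
  define C where "C = core_EP A"
  define Am where "Am = cmatpow A m"
  define Gm where "Gm = mp_inv Am"
  define Pm where "Pm = proj Am"
  define Cm where "Cm = cmatpow C m"
  obtain m' where m: "m = Suc m'" using assms by (cases m) auto
  have c1: "C ** A ** C = C" unfolding C_def by (rule core_EP_props(1))
  have c2: "A ** C ** C = C" unfolding C_def by (rule core_EP_props(2))
  obtain Y where Y: "C = Am ** Y" unfolding C_def Am_def using core_EP_props(3) by blast
  have "penrose Am Gm" unfolding Gm_def by (rule mp_inv_penrose)
  then have g1: "Am ** Gm ** Am = Am" by (simp add: penrose_def)
  have PmGm: "Pm = Am ** Gm" by (simp add: Pm_def Gm_def proj_def)
  have PC: "Pm ** C = C" by (simp add: PmGm Y matrix_mul_assoc g1)
  have CmS: "Cm = C ** cmatpow C m'" by (simp add: Cm_def m cmatpow_commute)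
  have PCm: "Pm ** Cm = Cm" by (simp add: CmS PC matrix_mul_assoc)
  have Cm1: "cmatpow C (Suc m) = Cm ** C" by (simp add: Cm_def)
  have ACm: "A ** cmatpow C (Suc m) = Cm"
  proof -
    have "A ** cmatpow C (Suc m) = A ** C ** C ** cmatpow C m'"
      by (simp only: m cmatpow_Suc_left matrix_mul_assoc)
    also have "\<dots> = Cm" by (simp only: c2 CmS)
    finally show ?thesis .
  qed
  have AmCm: "Am ** Cm = A ** C"
    unfolding Am_def Cm_def m by (rule pow_pow_absorb[OF c2])
  define Wk where "Wk = m_weak_core A m"
  have Wk: "Wk = cmatpow C (Suc m) ** Am ** Pm"
    by (simp add: Wk_def m_weak_core_def m_weak_group_def C_def Am_def Pm_def)
  have AW: "A ** Wk = Cm ** Am ** Pm"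
    by (simp add: Wk matrix_mul_assoc ACm[symmetric])
  have WAW: "Wk ** A ** Wk = Wk"
  proof -
    have "Wk ** A ** Wk = Wk ** (A ** Wk)" by (simp add: matrix_mul_assoc)
    also have "\<dots> = Wk ** (Cm ** Am ** Pm)" by (simp only: AW)
    also have "\<dots> = cmatpow C (Suc m) ** Am ** (Pm ** Cm) ** Am ** Pm"
      by (simp only: Wk matrix_mul_assoc)
    also have "\<dots> = Cm ** C ** (Am ** Cm) ** Am ** Pm" by (simp only: PCm Cm1 matrix_mul_assoc)
    also have "\<dots> = Cm ** (C ** A ** C) ** Am ** Pm" by (simp only: AmCm matrix_mul_assoc)
    also have "\<dots> = Wk" by (simp only: c1 Wk Cm1)
    finally show ?thesis .
  qed
  show ?thesis
    unfolding C_def[symmetric] Am_def[symmetric] Pm_def[symmetric] Cm_def[symmetric] Wk_def[symmetric]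
  proof (intro allI iffI)
    fix X
    assume "X ** A ** X = X \<and> A ** X = Cm ** Am ** Pm \<and> X ** A = cmatpow C (Suc m) ** Am ** Pm ** A"
    then have x1: "X ** A ** X = X" and x2: "A ** X = Cm ** Am ** Pm"
      and x3: "X ** A = cmatpow C (Suc m) ** Am ** Pm ** A" by auto
    have "X = (X ** A) ** X" using x1 by simp
    also have "\<dots> = Wk ** A ** X" by (simp only: x3 Wk)
    also have "\<dots> = Wk ** (A ** Wk)" by (simp only: matrix_mul_assoc[symmetric] x2 AW)
    also have "\<dots> = Wk" using WAW by (simp add: matrix_mul_assoc)
    finally show "X = Wk" .
  next
    fix X assume "X = Wk"
    then show "X ** A ** X = X \<and> A ** X = Cm ** Am ** Pm \<and> X ** A = cmatpow C (Suc m) ** Am ** Pm ** A"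
      using WAW AW Wk by simp
  qed
qed

end
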